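(* Let $n,m\in\mathbb{N}$, $\beta\in\mathbb{C}$ and $u\in S(n,\beta)$ (so also $u\in S(nm,\beta)$). Suppose the representatives $\{R_j^{nm,1}\}_{j\in I_{nm}}$ of $\Gamma_0(nm)\backslash SL(2,\mathbb{Z})$ and $\{R_i^{n,1}\}_{i\in I_n}$ of $\Gamma_0(n)\backslash SL(2,\mathbb{Z})$ satisfy $R_j^{nm,1}=R_{r(j)}^{nm,n}R^{n,1}_{\sigma_{m,n}(j)}$ for all $j\in I_{nm}$, where each $R_{r(j)}^{nm,n}$ is a representative of a coset in $\Gamma_0(nm)\backslash\Gamma_0(n)$. Then $(\mathrm{P}_{nm}\Pi_{nm}u)_j=(\mathrm{P}_n\Pi_nu)_{\sigma_{m,n}(j)}$ for all $j\in I_{nm}$.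
   Context: $\Gamma_0(N)=\{\begin{pmatrix}a&b\\c&d\end{pmatrix}\in SL(2,\mathbb{Z}):N\mid c\}$. $S(N,\beta)$: Maass cusp forms for $\Gamma_0(N)$ with spectral parameter $\beta$ (real-analytic, $\Gamma_0(N)$-invariant, eigenvalue $\beta(1-\beta)$ of $-y^2(\partial_x^2+\partial_y^2)$, rapid decay in cusps). $I_N$ indexes the right cosets $\Gamma_0(N)\backslash SL(2,\mathbb{Z})$ (coset $\Gamma_0(N)\begin{pmatrix}a&b\\c&d\end{pmatrix}$ labelled by the class $[c:d]_N$ of $(c,d)$ modulo $(x,y)\sim(kx,ky)\bmod N$, $\gcd(k,N)=1$), $R_i^{N,1}$ a representative of coset $i$; $\sigma_{m,n}:I_{nm}\to I_n$ is induced by $\Gamma_0(nm)g\mapsto\Gamma_0(n)g$. $\Pi_Nu=(u(R_i^{N,1}z))_{i\in I_N}$. $R_\zeta(z)=\frac{y}{(x-\zeta)^2+y^2}$ for $z=x+iy$; $\eta(u,v)=(v\partial_yu-u\partial_yv)dx+(u\partial_xv-v\partial_xu)dy$; $(\mathrm{P}_N\vec u)_i(\zeta)=\int_0^{i\infty}\eta(u_i,R_\zeta^\beta)$. *)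

theory Defs
  imports "HOL-Analysis.Analysis"
begin

text \<open>A 2x2 integer matrix (a b; c d) is represented as the tuple (a,b,c,d).\<close>
type_synonym mat2 = "int \<times> int \<times> int \<times> int"

definition mmul :: "mat2 \<Rightarrow> mat2 \<Rightarrow> mat2" where
  "mmul g h = (case g of (a,b,c,d) \<Rightarrow> case h of (a',b',c',d') \<Rightarrow>
     (a*a' + b*c', a*b' + b*d', c*a' + d*c', c*b' + d*d'))"

definition SL2Z :: "mat2 set" where
  "SL2Z = {(a,b,c,d). a*d - b*c = 1}"

definition Gamma0 :: "nat \<Rightarrow> mat2 set" where
  "Gamma0 N = {(a,b,c,d). (a,b,c,d) \<in> SL2Z \<and> int N dvd c}"

definition coset :: "nat \<Rightarrow> mat2 \<Rightarrow> mat2 set" where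
  "coset N g = {mmul h g | h. h \<in> Gamma0 N}"

text \<open>The index set I_N: the right cosets Gamma_0(N) \ SL(2,Z) themselves
  (the labels [c:d]_N are in bijection with them).\<close>
definition cosets :: "nat \<Rightarrow> mat2 set set" where
  "cosets N = coset N ` SL2Z"

text \<open>sigma_{m,n}: I_{nm} -> I_n induced by Gamma_0(nm) g |-> Gamma_0(n) g.\<close>
definition sigma :: "nat \<Rightarrow> nat \<Rightarrow> mat2 set \<Rightarrow> mat2 set" where
  "sigma m n C = coset n (SOME g. g \<in> C)"

definition is_reps :: "nat \<Rightarrow> (mat2 set \<Rightarrow> mat2) \<Rightarrow> bool" where
  "is_reps N R \<longleftrightarrow> (\<forall>C\<in>cosets N. R C \<in> C)"

definition moeb :: "mat2 \<Rightarrow> complex \<Rightarrow> complex" where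
  "moeb g z = (case g of (a,b,c,d) \<Rightarrow>
     (of_int a * z + of_int b) / (of_int c * z + of_int d))"

definition H :: "complex set" where
  "H = {z. Im z > 0}"

definition dx :: "(complex \<Rightarrow> complex) \<Rightarrow> complex \<Rightarrow> complex" where
  "dx f z = vector_derivative (\<lambda>t::real. f (z + of_real t)) (at 0)"

definition dy :: "(complex \<Rightarrow> complex) \<Rightarrow> complex \<Rightarrow> complex" where
  "dy f z = vector_derivative (\<lambda>t::real. f (z + \<i> * of_real t)) (at 0)"

definition real_analytic_on :: "complex set \<Rightarrow> (complex \<Rightarrow> complex) \<Rightarrow> bool" where
  "real_analytic_on S f \<longleftrightarrow>
     (\<forall>z0\<in>S. \<exists>r>0. \<exists>a :: nat \<Rightarrow> nat \<Rightarrow> complex. \<forall>w\<in>ball z0 r.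
        ((\<lambda>(j,k). norm (a j k * of_real ((Re w - Re z0) ^ j * (Im w - Im z0) ^ k)))
          summable_on UNIV) \<and>
        ((\<lambda>(j,k). a j k * of_real ((Re w - Re z0) ^ j * (Im w - Im z0) ^ k))
          has_sum f w) UNIV)"

definition maass_cusp :: "nat \<Rightarrow> complex \<Rightarrow> (complex \<Rightarrow> complex) \<Rightarrow> bool" where
  "maass_cusp N \<beta> u \<longleftrightarrow>
     real_analytic_on H u \<and>
     (\<forall>g\<in>Gamma0 N. \<forall>z\<in>H. u (moeb g z) = u z) \<and>
     (\<forall>z\<in>H. - (of_real ((Im z)^2)) * (dx (dx u) z + dy (dy u) z) = \<beta> * (1 - \<beta>) * u z) \<and>
     (\<forall>g\<in>SL2Z. \<forall>k::nat. \<exists>C. \<forall>z. Im z \<ge> 1 \<longrightarrow>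
          norm (u (moeb g z)) \<le> C * (Im z) powr (- real k))"

definition Pi_map :: "(mat2 set \<Rightarrow> mat2) \<Rightarrow> (complex \<Rightarrow> complex) \<Rightarrow> mat2 set \<Rightarrow> complex \<Rightarrow> complex" where
  "Pi_map R u = (\<lambda>i z. u (moeb (R i) z))"

definition Rzeta :: "complex \<Rightarrow> complex \<Rightarrow> complex" where
  "Rzeta \<zeta> z = of_real (Im z) / ((of_real (Re z) - \<zeta>)^2 + of_real ((Im z)^2))"

text \<open>The 1-form eta(u,v) = P dx + Q dy, represented by the pair (P,Q).\<close>
definition eta :: "(complex \<Rightarrow> complex) \<Rightarrow> (complex \<Rightarrow> complex) \<Rightarrow> complex \<Rightarrow> complex \<times> complex" where
  "eta u v = (\<lambda>z. (v z * dy u z - u z * dy v z, u z * dx v z - v z * dx u z))"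

text \<open>Integral of a 1-form along the path t |-> i t, t from 0 to infinity.\<close>
definition int_0_iinf :: "(complex \<Rightarrow> complex \<times> complex) \<Rightarrow> complex" where
  "int_0_iinf \<omega> = integral {0<..} (\<lambda>t::real.
     fst (\<omega> (\<i> * of_real t)) * of_real (Re \<i>) + snd (\<omega> (\<i> * of_real t)) * of_real (Im \<i>))"

definition P_map :: "complex \<Rightarrow> (mat2 set \<Rightarrow> complex \<Rightarrow> complex) \<Rightarrow> mat2 set \<Rightarrow> complex \<Rightarrow> complex" where
  "P_map \<beta> uv = (\<lambda>i \<zeta>. int_0_iinf (eta (uv i) (\<lambda>z. (Rzeta \<zeta> z) powr \<beta>)))"

end

theory Submission
  imports Defs
begin

lemma loc_eq_dx_dy:
  assumes S: "open S" and eq: "\<And>w. w \<in> S \<Longrightarrow> f w = g w" and z: "z \<in> S"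
  shows "dx f z = dx g z" "dy f z = dy g z"
proof -
  obtain e where e: "e > 0" "ball z e \<subseteq> S" using S z open_contains_ball by blast
  have ev: "eventually (\<lambda>t::real. norm t < e) (nhds 0)"
    using e(1) unfolding eventually_nhds_metric by (auto simp: dist_norm)
  have ev1: "eventually (\<lambda>t::real. t \<in> UNIV \<longrightarrow> f (z + of_real t) = g (z + of_real t)) (nhds 0)"
    using ev
  proof (rule eventually_mono)
    fix t :: real assume "norm t < e"
    then have "z + of_real t \<in> ball z e" by (simp add: dist_norm)
    then show "t \<in> UNIV \<longrightarrow> f (z + of_real t) = g (z + of_real t)" using e eq by blast
  qed
  have ev2: "eventually (\<lambda>t::real. t \<in> UNIV \<longrightarrow> f (z + \<i> * of_real t) = g (z + \<i> * of_real t)) (nhds 0)"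
    using ev
  proof (rule eventually_mono)
    fix t :: real assume "norm t < e"
    then have "z + \<i> * of_real t \<in> ball z e" by (simp add: dist_norm norm_mult)
    then show "t \<in> UNIV \<longrightarrow> f (z + \<i> * of_real t) = g (z + \<i> * of_real t)" using e eq by blast
  qed
  show "dx f z = dx g z" unfolding dx_def
    by (rule vector_derivative_cong_eq[OF ev1]) auto
  show "dy f z = dy g z" unfolding dy_def
    by (rule vector_derivative_cong_eq[OF ev2]) auto
qed

lemma open_H: "open H"
  unfolding H_def by (simp add: open_halfspace_Im_gt)

lemma denom_nz:
  assumes "a*d - b*c = (1::int)" "Im z > 0"
  shows "of_int c * z + of_int d \<noteq> 0"
proof
  assume h: "of_int c * z + of_int d = 0"
  then have "Im (of_int c * z + of_int d) = 0" by simp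
  then have "c = 0" using assms(2) by simp
  with h have "d = 0" by simp
  with \<open>c = 0\<close> assms(1) show False by simp
qed

lemma Im_moeb:
  assumes "g \<in> SL2Z" "Im z > 0"
  shows "Im (moeb g z) > 0"
proof -
  obtain a b c d where g: "g = (a,b,c,d)" by (cases g) auto
  with assms have det: "a*d - b*c = 1" by (simp add: SL2Z_def)
  have nz: "of_int c * z + of_int d \<noteq> 0" using denom_nz[OF det assms(2)] .
  have num: "Im (of_int a * z + of_int b) * Re (of_int c * z + of_int d)
      - Re (of_int a * z + of_int b) * Im (of_int c * z + of_int d) = real_of_int (a*d - b*c) * Im z"
    by (simp add: algebra_simps)
  have "Re (of_int c * z + of_int d)^2 + Im (of_int c * z + of_int d)^2 > 0"
    using nz by (metis complex_eq_0 less_eq_real_def not_le sum_power2_ge_zero)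
  then show ?thesis using num det assms(2)
    by (simp add: g moeb_def Im_divide)
qed

lemma moeb_mmul:
  assumes "h \<in> SL2Z" "g \<in> SL2Z" "Im z > 0"
  shows "moeb (mmul h g) z = moeb h (moeb g z)"
proof -
  obtain a b c d where g: "g = (a,b,c,d)" by (cases g) auto
  obtain a' b' c' d' where h: "h = (a',b',c',d')" by (cases h) auto
  have detg: "a*d - b*c = 1" using assms g by (simp add: SL2Z_def)
  have deth: "a'*d' - b'*c' = 1" using assms h by (simp add: SL2Z_def)
  have nz: "of_int c * z + of_int d \<noteq> 0" using denom_nz[OF detg assms(3)] .
  have "Im (moeb g z) > 0" using Im_moeb assms by blast
  then have nz2: "of_int c' * moeb g z + of_int d' \<noteq> 0" using denom_nz[OF deth] by blast
  then have nz3: "of_int c' * (of_int a * z + of_int b) + of_int d' * (of_int c * z + of_int d) \<noteq> 0"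
    using nz by (simp add: g moeb_def field_simps)
  define N where "N = of_int a * z + of_int b"
  define D where "D = of_int c * z + of_int d"
  have "moeb h (moeb g z) = (of_int a' * (N/D) + of_int b') / (of_int c' * (N/D) + of_int d')"
    by (simp add: g h moeb_def N_def D_def)
  also have "\<dots> = (of_int a' * N + of_int b' * D) / (of_int c' * N + of_int d' * D)"
  proof -
    have 1: "of_int a' * (N/D) + of_int b' = (of_int a' * N + of_int b' * D) / D"
      using nz unfolding D_def[symmetric] by (simp add: field_simps)
    have 2: "of_int c' * (N/D) + of_int d' = (of_int c' * N + of_int d' * D) / D"
      using nz unfolding D_def[symmetric] by (simp add: field_simps)
    show ?thesis unfolding 1 2 using nz unfolding D_def[symmetric] by simp
  qed
  also have "\<dots> = moeb (mmul h g) z"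
    by (simp add: g h moeb_def mmul_def N_def D_def algebra_simps)
  finally show ?thesis by simp
qed

lemma mmul_SL2Z: "h \<in> SL2Z \<Longrightarrow> g \<in> SL2Z \<Longrightarrow> mmul h g \<in> SL2Z"
  unfolding SL2Z_def mmul_def
  by (auto simp: algebra_simps)

lemma Gamma0_SL2Z: "Gamma0 N \<subseteq> SL2Z"
  unfolding Gamma0_def by auto

lemma coset_SL2Z: "g \<in> SL2Z \<Longrightarrow> coset N g \<subseteq> SL2Z"
  unfolding coset_def using Gamma0_SL2Z mmul_SL2Z by blast

theorem mainTheorem12:
  fixes n m :: nat and \<beta> :: complex and u :: "complex \<Rightarrow> complex"
    and R1 R2 :: "mat2 set \<Rightarrow> mat2"
  assumes "n \<ge> 1" and "m \<ge> 1"
    and "maass_cusp n \<beta> u"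
    and "is_reps (n * m) R1" and "is_reps n R2"
    and "\<forall>j\<in>cosets (n * m). \<exists>h\<in>Gamma0 n. R1 j = mmul h (R2 (sigma m n j))"
  shows "\<forall>j\<in>cosets (n * m).
           P_map \<beta> (Pi_map R1 u) j = P_map \<beta> (Pi_map R2 u) (sigma m n j)"
proof
  fix j assume j: "j \<in> cosets (n * m)"
  then obtain g where g: "g \<in> SL2Z" "j = coset (n*m) g" unfolding cosets_def by blast
  have "(1,0,0,1) \<in> Gamma0 (n*m)" unfolding Gamma0_def SL2Z_def by simp
  then have "mmul (1,0,0,1) g \<in> j" unfolding g(2) coset_def by blast
  then have ne: "\<exists>x. x \<in> j" by blast
  define g' where "g' = (SOME x. x \<in> j)"
  have g'j: "g' \<in> j" unfolding g'_def using ne someI_ex by metis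
  have g'S: "g' \<in> SL2Z" using g'j g coset_SL2Z by blast
  have sig: "sigma m n j = coset n g'" unfolding sigma_def g'_def ..
  have sigc: "sigma m n j \<in> cosets n" using sig g'S unfolding cosets_def by blast
  have R2S: "R2 (sigma m n j) \<in> SL2Z"
    using assms(5) sigc sig g'S coset_SL2Z unfolding is_reps_def by blast
  obtain h where h: "h \<in> Gamma0 n" "R1 j = mmul h (R2 (sigma m n j))" using assms(6) j by blast
  have hS: "h \<in> SL2Z" using h Gamma0_SL2Z by blast
  have inv: "\<forall>g\<in>Gamma0 n. \<forall>z\<in>H. u (moeb g z) = u z" using assms(3) unfolding maass_cusp_def by blast
  have eqH: "Pi_map R1 u j w = Pi_map R2 u (sigma m n j) w" if w: "w \<in> H" for w
  proof -
    have wi: "Im w > 0" using w unfolding H_def by simp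
    have "moeb (R2 (sigma m n j)) w \<in> H" using Im_moeb[OF R2S wi] unfolding H_def by simp
    then show ?thesis unfolding Pi_map_def h(2) moeb_mmul[OF hS R2S wi]
      using inv h(1) by blast
  qed
  have "eta (Pi_map R1 u j) F z = eta (Pi_map R2 u (sigma m n j)) F z" if z: "z \<in> H" for F z
    unfolding eta_def using loc_eq_dx_dy[OF open_H eqH z] eqH[OF z] by simp
  moreover have "\<i> * of_real t \<in> H" if "t > 0" for t :: real using that unfolding H_def by simp
  ultimately show "P_map \<beta> (Pi_map R1 u) j = P_map \<beta> (Pi_map R2 u) (sigma m n j)"
    unfolding P_map_def int_0_iinf_def
    by (intro ext integral_cong) auto
qed

end
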